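(* Let $(M,d)$ be a compact metric space and $\varphi:M\to M$ continuous, and assume either (C) there is a homeomorphism $\theta$ of $M$ with $\theta\circ\theta=\mathrm{Id}_M$ and $\varphi=\theta\circ\varphi\circ\theta$ (set $\theta_n=\theta$), or (R) $\varphi$ is a homeomorphism and there is a homeomorphism $\theta$ with $\theta\circ\theta=\mathrm{Id}_M$ and $\varphi^{-1}=\theta\circ\varphi\circ\theta$ (set $\theta_n=\theta\circ\varphi^{n-1}$). If $\mathcal G=\{G_n\}$ is asymptotically additive with approximating sequence $\{G^{(k)}\}$, then $\mathcal G\circ\theta:=\{G_n\circ\theta_n\}$ is asymptotically additive with approximating sequence $\{G^{(k)}\circ\theta\}$.
   Context: $C(M),B(M)$: continuous/bounded Borel real functions with sup norm; $S_nG=\sum_{k<n}G\circ\varphi^k$. $\mathcal G=\{G_n\}\subset B(M)$ is asymptotically additive with approximating sequence $\{G^{(k)}\}\subset C(M)$ if $\lim_k\limsup_nn^{-1}\|G_n-S_nG^{(k)}\|_\infty=0$. *)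

theory Defs
  imports "HOL-Analysis.Analysis" "HOL-Library.Extended_Real" "HOL-Library.Liminf_Limsup"
begin

text \<open>The compact metric space M is the whole type 'a (with compact UNIV assumed).\<close>

definition sup_norm :: "('a \<Rightarrow> real) \<Rightarrow> real" where
  "sup_norm f = (SUP x. \<bar>f x\<bar>)"

definition birkhoff_sum :: "('a \<Rightarrow> 'a) \<Rightarrow> nat \<Rightarrow> ('a \<Rightarrow> real) \<Rightarrow> 'a \<Rightarrow> real" where
  "birkhoff_sum \<phi> n g x = (\<Sum>k<n. g ((\<phi> ^^ k) x))"

definition bounded_borel :: "('a::topological_space \<Rightarrow> real) \<Rightarrow> bool" where
  "bounded_borel f \<longleftrightarrow> f \<in> borel_measurable borel \<and> bounded (range f)"

definition asymptotically_additive ::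
  "('a::metric_space \<Rightarrow> 'a) \<Rightarrow> (nat \<Rightarrow> 'a \<Rightarrow> real) \<Rightarrow> (nat \<Rightarrow> 'a \<Rightarrow> real) \<Rightarrow> bool" where
  "asymptotically_additive \<phi> G Gk \<longleftrightarrow>
     (\<forall>n. bounded_borel (G n)) \<and> (\<forall>k. continuous_on UNIV (Gk k)) \<and>
     ((\<lambda>k. limsup (\<lambda>n. ereal (sup_norm (\<lambda>x. G n x - birkhoff_sum \<phi> n (Gk k) x) / real n)))
        \<longlonglongrightarrow> 0)"

end

theory Submission
  imports Defs
begin

lemma sup_norm_surj:
  assumes "\<And>x. f x = h (\<sigma> x)" and "surj \<sigma>"
  shows "sup_norm f = sup_norm h"
proof -
  have "sup_norm f = Sup ((\<lambda>y. \<bar>h y\<bar>) ` (\<sigma> ` UNIV))"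
    unfolding sup_norm_def assms(1) image_image by simp
  also have "\<dots> = sup_norm h" using assms(2) by (simp add: sup_norm_def)
  finally show ?thesis .
qed

lemma cont_funpow:
  fixes f :: "'a::topological_space \<Rightarrow> 'a"
  assumes "continuous_on UNIV f" shows "continuous_on UNIV (f ^^ n)"
proof (induction n)
  case 0 have "f ^^ 0 = (\<lambda>x. x)" by (rule ext) simp
  then show ?case by (simp add: continuous_on_id)
next
  case (Suc n)
  then show ?case using continuous_on_compose[OF Suc assms[THEN continuous_on_subset]]
    by (simp add: comp_def)
qed

lemma comm_funpow:
  assumes "\<And>x. \<theta> (\<phi> x) = \<phi> (\<theta> x)" shows "\<theta> ((\<phi> ^^ k) x) = (\<phi> ^^ k) (\<theta> x)"
  by (induction k) (simp_all add: assms)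

lemma rev_funpow:
  assumes "\<And>x. \<phi> (\<theta> (\<phi> x)) = \<theta> x"
  shows "(\<phi> ^^ m) (\<theta> ((\<phi> ^^ (m + k)) x)) = \<theta> ((\<phi> ^^ k) x)"
proof (induction m)
  case 0 then show ?case by simp
next
  case (Suc m)
  have "(\<phi> ^^ Suc m) (\<theta> ((\<phi> ^^ (Suc m + k)) x))
      = (\<phi> ^^ m) (\<phi> (\<theta> (\<phi> ((\<phi> ^^ (m + k)) x))))"
    by (simp add: funpow_swap1)
  also have "\<dots> = (\<phi> ^^ m) (\<theta> ((\<phi> ^^ (m + k)) x))" by (simp add: assms)
  finally show ?case using Suc by simp
qed

theorem lemma3p6:
  fixes \<phi> \<theta> :: "'a::metric_space \<Rightarrow> 'a"
    and \<theta>n :: "nat \<Rightarrow> 'a \<Rightarrow> 'a"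
    and G Gk :: "nat \<Rightarrow> 'a \<Rightarrow> real"
  assumes "compact (UNIV :: 'a set)"
    and "continuous_on UNIV \<phi>"
    and "homeomorphism UNIV UNIV \<theta> \<theta>"
    and "(\<phi> = \<theta> \<circ> \<phi> \<circ> \<theta> \<and> \<theta>n = (\<lambda>n. \<theta>))
         \<or> ((\<exists>\<psi>. homeomorphism UNIV UNIV \<phi> \<psi> \<and> \<psi> = \<theta> \<circ> \<phi> \<circ> \<theta>)
            \<and> \<theta>n = (\<lambda>n. \<theta> \<circ> (\<phi> ^^ (n - 1))))"
    and "asymptotically_additive \<phi> G Gk"
  shows "asymptotically_additive \<phi> (\<lambda>n. G n \<circ> \<theta>n n) (\<lambda>k. Gk k \<circ> \<theta>)"
proof -
  have th2: "\<And>x. \<theta> (\<theta> x) = x" and thc: "continuous_on UNIV \<theta>"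
    using assms(3) unfolding homeomorphism_def by auto
  have surjth: "surj \<theta>" by (metis th2 surjI)
  have key: "\<And>n x g. birkhoff_sum \<phi> n (g \<circ> \<theta>) x = birkhoff_sum \<phi> n g (\<theta>n n x)
       \<and> surj (\<theta>n n) \<and> continuous_on UNIV (\<theta>n n)"
    using assms(4)
  proof
    assume A: "\<phi> = \<theta> \<circ> \<phi> \<circ> \<theta> \<and> \<theta>n = (\<lambda>n. \<theta>)"
    have c: "\<And>x. \<theta> (\<phi> x) = \<phi> (\<theta> x)"
    proof -
      fix x
      have "\<phi> (\<theta> x) = \<theta> (\<phi> (\<theta> (\<theta> x)))" using A by (metis comp_apply)
      then show "\<theta> (\<phi> x) = \<phi> (\<theta> x)" by (simp add: th2)
    qed
    fix n x and g :: "'a \<Rightarrow> real"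
    show "birkhoff_sum \<phi> n (g \<circ> \<theta>) x = birkhoff_sum \<phi> n g (\<theta>n n x)
       \<and> surj (\<theta>n n) \<and> continuous_on UNIV (\<theta>n n)"
      using A surjth thc by (simp add: birkhoff_sum_def comm_funpow[where \<theta>=\<theta> and \<phi>=\<phi>, OF c])
  next
    assume A: "(\<exists>\<psi>. homeomorphism UNIV UNIV \<phi> \<psi> \<and> \<psi> = \<theta> \<circ> \<phi> \<circ> \<theta>)
            \<and> \<theta>n = (\<lambda>n. \<theta> \<circ> (\<phi> ^^ (n - 1)))"
    then obtain \<psi> where h: "homeomorphism UNIV UNIV \<phi> \<psi>" and p: "\<psi> = \<theta> \<circ> \<phi> \<circ> \<theta>"
      and tn: "\<theta>n = (\<lambda>n. \<theta> \<circ> (\<phi> ^^ (n - 1)))" by blast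
    have ph: "\<And>x. \<phi> (\<psi> x) = x" "\<And>x. \<psi> (\<phi> x) = x"
      using h unfolding homeomorphism_def by auto
    have r: "\<And>x. \<phi> (\<theta> (\<phi> x)) = \<theta> x"
    proof -
      fix x
      have "\<phi> (\<theta> (\<phi> (\<theta> (\<theta> x)))) = \<theta> x" using ph(1)[of "\<theta> x"] p by simp
      then show "\<phi> (\<theta> (\<phi> x)) = \<theta> x" by (simp add: th2)
    qed
    have sp: "surj \<phi>" by (metis ph(1) surjI)
    have spn: "\<And>m. surj (\<phi> ^^ m)" using sp by (simp add: surj_fn)
    fix n x and g :: "'a \<Rightarrow> real"
    have "birkhoff_sum \<phi> n (g \<circ> \<theta>) x = (\<Sum>k<n. g ((\<phi> ^^ (n - Suc k)) (\<theta>n n x)))"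
      unfolding birkhoff_sum_def tn
    proof (intro sum.cong refl)
      fix k assume "k \<in> {..<n}"
      then have "n - 1 = (n - Suc k) + k" by auto
      then show "(g \<circ> \<theta>) ((\<phi> ^^ k) x) = g ((\<phi> ^^ (n - Suc k)) (((\<theta> \<circ> (\<phi> ^^ (n - 1)))) x))"
        using rev_funpow[where \<theta>=\<theta> and \<phi>=\<phi>, OF r, of "n - Suc k" k x] by simp
    qed
    also have "\<dots> = birkhoff_sum \<phi> n g (\<theta>n n x)"
      unfolding birkhoff_sum_def by (rule sum.nat_diff_reindex)
    finally show "birkhoff_sum \<phi> n (g \<circ> \<theta>) x = birkhoff_sum \<phi> n g (\<theta>n n x)
       \<and> surj (\<theta>n n) \<and> continuous_on UNIV (\<theta>n n)"
      using comp_surj[OF spn[of "n - 1"] surjth] tn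
        continuous_on_compose[OF cont_funpow[OF assms(2), of "n - 1"] continuous_on_subset[OF thc]]
      by simp
  qed
  have AA: "(\<forall>n. bounded_borel (G n)) \<and> (\<forall>k. continuous_on UNIV (Gk k)) \<and>
     ((\<lambda>k. limsup (\<lambda>n. ereal (sup_norm (\<lambda>x. G n x - birkhoff_sum \<phi> n (Gk k) x) / real n)))
        \<longlonglongrightarrow> 0)" using assms(5) unfolding asymptotically_additive_def .
  have eq: "\<And>n k. sup_norm (\<lambda>x. (G n \<circ> \<theta>n n) x - birkhoff_sum \<phi> n (Gk k \<circ> \<theta>) x)
     = sup_norm (\<lambda>x. G n x - birkhoff_sum \<phi> n (Gk k) x)"
    by (rule sup_norm_surj[where \<sigma> = "\<theta>n _"]) (use key in auto)
  have bb: "bounded_borel (G n \<circ> \<theta>n n)" for n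
  proof -
    have "G n \<in> borel_measurable borel" "bounded (range (G n))"
      using AA unfolding bounded_borel_def by auto
    moreover have "\<theta>n n \<in> borel_measurable borel"
      using key borel_measurable_continuous_onI by blast
    moreover have "range (G n \<circ> \<theta>n n) \<subseteq> range (G n)" by auto
    ultimately show ?thesis unfolding bounded_borel_def
      using measurable_comp bounded_subset by blast
  qed
  have cc: "continuous_on UNIV (Gk k \<circ> \<theta>)" for k
    using AA thc by (metis continuous_on_compose continuous_on_subset subset_UNIV)
  show ?thesis unfolding asymptotically_additive_def eq using AA bb cc by simp
qed

end
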